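(* Let $\mathbf{F}$ be a field of characteristic $3$, let $\lambda=(\lambda_1,\lambda_2)$ be a partition with $m=\lambda_1-\lambda_2$, and let $u\in\mathbf{N}_0$ with $\lambda_2\ge 2\cdot3^u$. Let $m_u$ denote the $u$-th base-3 digit of $m$. Then in $S_\mathbf{F}(\lambda)$: \[b(3^u)^2=b(3^u)\Big[\tbinom{m_u+2}{1}+\psi_{m,u}\Big]+b(2\cdot3^u),\] \[b(2\cdot3^u)^2=b(2\cdot3^u)\Big[\tbinom{m_u+1}{2}+\tbinom{m_u+1}{1}\psi_{m,u}\Big],\] \[b(3^u)b(2\cdot3^u)=b(2\cdot3^u)\Big[2\tbinom{m_u}{1}-\psi_{m,u}\Big],\] where integer coefficients are read in $\mathbf{F}$.
   Context: $S_\mathbf{F}(\lambda)=\operatorname{End}_{\mathbf{F}S_r}(M^\lambda)$ is a commutative $\mathbf{F}$-algebra with basis $b(0)=\mathbf{1},\dots,b(\lambda_2)$ and multiplication $b(i)b(j)=\sum_{h=\max\{i,j\}}^{i+j}\binom{h}{i}\binom{h}{j}\binom{m+i+j}{i+j-h}b(h)$, $b(a)=0$ for $a>\lambda_2$. For $m=\sum_u m_u3^u$ in base 3, $m_{<u}=\sum_{s<u}m_s3^s$, and \[\psi_{m,u}=\sum_{k=1}^{3^u-1}\binom{m_{<u}}{3^u-k}b(k)\in S_\mathbf{F}(\lambda).\] *)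

theory Defs
  imports Main
begin

text \<open>Model of S_F(lambda): elements are coefficient vectors c :: nat => 'a
  representing sum_{i <= l2} c i * b(i), where l2 = lambda_2 (coefficients at
  indices > l2 are ignored/zero). m = lambda_1 - lambda_2.\<close>

definition sc_coef :: "nat \<Rightarrow> nat \<Rightarrow> nat \<Rightarrow> nat \<Rightarrow> nat" where
  "sc_coef m i j h =
     (if max i j \<le> h \<and> h \<le> i + j
      then (h choose i) * (h choose j) * ((m + i + j) choose (i + j - h)) else 0)"

definition sb :: "nat \<Rightarrow> nat \<Rightarrow> nat \<Rightarrow> 'a::field" where
  "sb l2 a = (\<lambda>k. if k = a \<and> a \<le> l2 then 1 else 0)"

definition sadd :: "(nat \<Rightarrow> 'a::field) \<Rightarrow> (nat \<Rightarrow> 'a) \<Rightarrow> nat \<Rightarrow> 'a" where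
  "sadd x y = (\<lambda>k. x k + y k)"

definition ssub :: "(nat \<Rightarrow> 'a::field) \<Rightarrow> (nat \<Rightarrow> 'a) \<Rightarrow> nat \<Rightarrow> 'a" where
  "ssub x y = (\<lambda>k. x k - y k)"

definition ssmult :: "'a::field \<Rightarrow> (nat \<Rightarrow> 'a) \<Rightarrow> nat \<Rightarrow> 'a" where
  "ssmult c x = (\<lambda>k. c * x k)"

text \<open>bilinear extension of b(i)b(j) = sum_h sc_coef m i j h b(h), truncated at l2\<close>
definition smul :: "nat \<Rightarrow> nat \<Rightarrow> (nat \<Rightarrow> 'a::field) \<Rightarrow> (nat \<Rightarrow> 'a) \<Rightarrow> nat \<Rightarrow> 'a" where
  "smul m l2 x y = (\<lambda>h. if h \<le> l2
       then (\<Sum>i\<le>l2. \<Sum>j\<le>l2. x i * y j * of_nat (sc_coef m i j h)) else 0)"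

definition sone :: "nat \<Rightarrow> nat \<Rightarrow> 'a::field" where
  "sone l2 = sb l2 0"

text \<open>m_{<u} = sum_{s<u} m_s 3^s = m mod 3^u; m_u = u-th base-3 digit\<close>
definition mlow :: "nat \<Rightarrow> nat \<Rightarrow> nat" where
  "mlow m u = m mod 3 ^ u"

definition digit3 :: "nat \<Rightarrow> nat \<Rightarrow> nat" where
  "digit3 m u = m div 3 ^ u mod 3"

definition psi :: "nat \<Rightarrow> nat \<Rightarrow> nat \<Rightarrow> nat \<Rightarrow> 'a::field" where
  "psi m u l2 = (\<lambda>k. \<Sum>t\<in>{1..3 ^ u - 1}. of_nat (mlow m u choose (3 ^ u - t)) * sb l2 t k)"

end

theory Submission imports Defs "HOL-Computational_Algebra.Primes" begin

lemma c3_mod: assumes "CHAR('a::field) = 3" shows "(of_nat n :: 'a) = of_nat (n mod 3)"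
proof -
  have "n = n mod 3 + 3 * (n div 3)" by simp
  hence "(of_nat n :: 'a) = of_nat (n mod 3) + of_nat 3 * of_nat (n div 3)"
    by (metis of_nat_add of_nat_mult)
  moreover have "(of_nat 3 :: 'a) = 0" using assms of_nat_CHAR[where 'a='a] by simp
  ultimately show ?thesis by simp
qed

lemma three_dvd_choose: assumes "0 < k" "k < 3^u" shows "3 dvd (3^u choose k)"
proof (rule ccontr)
  assume nd: "\<not> 3 dvd (3^u choose k)"
  obtain j where kj: "k = Suc j" using assms(1) by (cases k) auto
  have "Suc j * (3^u choose Suc j) = 3^u * ((3^u - 1) choose j)" by (rule binomial_absorption)
  hence d: "3^u dvd k * (3^u choose k)" using kj by (metis dvd_triv_left)
  have "coprime (3::nat) (3^u choose k)"
    using nd prime_imp_coprime[of "3::nat"] by simp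
  hence "coprime ((3::nat)^u) (3^u choose k)" by simp
  hence "3^u dvd k" using d coprime_dvd_mult_left_iff by blast
  thus False using assms by (simp add: nat_dvd_not_less)
qed

lemma choose_U_0: assumes "CHAR('a::field) = 3" "0 < k" "k \<noteq> 3^u"
  shows "(of_nat (3^u choose k) :: 'a) = 0"
proof (cases "k < 3^u")
  case True
  then show ?thesis using three_dvd_choose[OF assms(2) True] assms(1) of_nat_eq_0_iff_char_dvd[where 'a='a] by simp
next
  case False
  then have "3^u < k" using assms(3) by simp
  then show ?thesis by (simp add: binomial_eq_0)
qed

lemma step_U: assumes "CHAR('a::field) = 3"
  shows "(of_nat ((x + 3^u) choose y) :: 'a) = of_nat (x choose y) + (if 3^u \<le> y then of_nat (x choose (y - 3^u)) else 0)"
proof -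
  have v: "(3^u + x) choose y = (\<Sum>k\<le>y. (3^u choose k) * (x choose (y - k)))"
    by (rule vandermonde[symmetric])
  have "(of_nat ((x + 3^u) choose y) :: 'a) = (\<Sum>k\<le>y. of_nat (3^u choose k) * of_nat (x choose (y - k)))"
    by (simp only: add.commute[of x] v of_nat_sum of_nat_mult)
  also have "\<dots> = (\<Sum>k\<in>{0} \<union> ({3^u} \<inter> {..y}). of_nat (3^u choose k) * of_nat (x choose (y - k)))"
  proof (rule sum.mono_neutral_right)
    show "\<forall>k\<in>{..y} - ({0} \<union> ({3^u} \<inter> {..y})). (of_nat (3^u choose k) :: 'a) * of_nat (x choose (y - k)) = 0"
    proof
      fix k assume "k \<in> {..y} - ({0} \<union> ({3^u} \<inter> {..y}))"
      hence "0 < k" "k \<noteq> 3^u" by auto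
      thus "(of_nat (3^u choose k) :: 'a) * of_nat (x choose (y - k)) = 0" using choose_U_0[OF assms] by simp
    qed
  qed auto
  also have "\<dots> = of_nat (x choose y) + (if 3^u \<le> y then of_nat (x choose (y - 3^u)) else 0)"
    by (subst sum.union_disjoint) auto
  finally show ?thesis .
qed

lemma lucas_aux: assumes "CHAR('a::field) = 3" "a < 3^u"
  shows "(of_nat ((a + 3^u * n) choose y) :: 'a) = of_nat (a choose (y mod 3^u)) * of_nat (n choose (y div 3^u))"
  using assms(2)
proof (induction n arbitrary: y)
  case 0
  show ?case
  proof (cases "y < 3^u")
    case True then show ?thesis by simp
  next
    case False
    hence "y div 3^u \<noteq> 0" by (simp add: div_eq_0_iff)
    moreover have "a choose y = 0" using False 0 by simp
    ultimately show ?thesis by (simp add: binomial_eq_0)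
  qed
next
  case (Suc n)
  have e: "a + 3^u * Suc n = (a + 3^u * n) + 3^u" by simp
  show ?case
  proof (cases "3^u \<le> y")
    case False
    then show ?thesis unfolding e step_U[OF assms(1)] using Suc by simp
  next
    case True
    obtain z where z: "y = z + 3^u" using True by (auto simp: le_iff_add add.commute)
    define d where "d = z div 3^u"
    have "(z + 3^u) div 3^u = z div 3^u + 1" by (rule div_add_self2) simp
    hence d: "y div 3^u = Suc d" using z d_def by simp
    have m: "(y - 3^u) mod 3^u = y mod 3^u" using z by simp
    have dv: "(y - 3^u) div 3^u = d" using z d_def by simp
    show ?thesis unfolding e step_U[OF assms(1)] using True Suc d m dv
      by (simp add: distrib_left)
  qed
qed

lemma lucas: assumes "CHAR('a::field) = 3"
  shows "(of_nat (x choose y) :: 'a) = of_nat ((x mod 3^u) choose (y mod 3^u)) * of_nat ((x div 3^u) choose (y div 3^u))"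
proof -
  have "(of_nat (x choose y) :: 'a) = of_nat ((x mod 3^u + 3^u * (x div 3^u)) choose y)"
    by (simp only: mod_mult_div_eq)
  also have "\<dots> = of_nat ((x mod 3^u) choose (y mod 3^u)) * of_nat ((x div 3^u) choose (y div 3^u))"
    by (rule lucas_aux[OF assms]) (rule mod_less_divisor, simp)
  finally show ?thesis .
qed

lemma lucas2: assumes "CHAR('a::field) = 3" "a < 3^u" "b < 3^u"
  shows "(of_nat ((a + 3^u * k) choose (b + 3^u * j)) :: 'a) = of_nat (a choose b) * of_nat (k choose j)"
proof -
  have "(b + 3^u * j) mod 3^u = b" using assms(3) by simp
  moreover have "(b + 3^u * j) div 3^u = j" using assms(3) by simp
  ultimately show ?thesis using lucas_aux[OF assms(1,2), of k "b + 3^u * j"] by simp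
qed

lemma coefK: assumes c: "CHAR('a::field) = 3" and t: "t < 3^u"
  shows "(of_nat (sc_coef m (3^u * k) t h) :: 'a) = (if h = 3^u * k + t then 1 else 0)"
proof (cases "max (3^u * k) t \<le> h \<and> h \<le> 3^u * k + t")
  case False
  then show ?thesis by (auto simp: sc_coef_def)
next
  case True
  then obtain r where r: "h = r + 3^u * k" "r \<le> t" by (metis add.commute le_add_diff_inverse max.bounded_iff nat_add_left_cancel_le)
  have rU: "r < 3^u" using r t by simp
  have e1: "(of_nat (h choose (3^u * k)) :: 'a) = 1"
    using lucas2[OF c rU, of 0 k k] r by simp
  have e2: "(of_nat (h choose t) :: 'a) = of_nat (r choose t)"
    using lucas2[OF c rU t, of k 0] r by simp
  show ?thesis
  proof (cases "r = t")
    case True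
    then show ?thesis using True e1 e2 r unfolding sc_coef_def by (simp add: add.commute)
  next
    case False
    hence "r < t" using r by simp
    hence "(of_nat (r choose t) :: 'a) = 0" by (simp add: binomial_eq_0)
    hence "(of_nat (h choose t) :: 'a) = 0" using e2 by simp
    then show ?thesis using r False unfolding sc_coef_def by (auto simp: add.commute)
  qed
qed

lemma smul_sb: assumes "a \<le> l2"
  shows "smul m l2 (sb l2 a) y h = (if h \<le> l2 then (\<Sum>j\<le>l2. y j * of_nat (sc_coef m a j h)) else (0::'a::field))"
proof -
  have "(\<Sum>i\<le>l2. \<Sum>j\<le>l2. sb l2 a i * y j * (of_nat (sc_coef m i j h) :: 'a))
      = (\<Sum>i\<le>l2. if i = a then (\<Sum>j\<le>l2. y j * of_nat (sc_coef m a j h)) else 0)"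
    by (rule sum.cong) (auto simp: sb_def assms)
  also have "\<dots> = (\<Sum>j\<le>l2. y j * of_nat (sc_coef m a j h))" using assms by simp
  finally show ?thesis unfolding smul_def by simp
qed

lemma psi_val: assumes "3^u \<le> l2"
  shows "(psi m u l2 j :: 'a::field) = (if 1 \<le> j \<and> j < 3^u then of_nat (mlow m u choose (3^u - j)) else 0)"
proof -
  have "(psi m u l2 j :: 'a) = (\<Sum>t\<in>{1..3 ^ u - 1}. if j = t then of_nat (mlow m u choose (3 ^ u - t)) else 0)"
    unfolding psi_def by (rule sum.cong) (use assms in \<open>auto simp: sb_def\<close>)
  also have "\<dots> = (if j \<in> {1..3 ^ u - 1} then of_nat (mlow m u choose (3^u - j)) else 0)"
    by (simp add: sum.delta)
  also have "\<dots> = (if 1 \<le> j \<and> j < 3^u then of_nat (mlow m u choose (3^u - j)) else 0)"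
    by (cases "1 \<le> j \<and> j < 3^u") auto
  finally show ?thesis .
qed

lemma lemR: assumes c: "CHAR('a::field) = 3"
  and y: "\<And>j. y j = c0 * (if j = 0 then 1 else 0) + d * (psi m u l2 j :: 'a)"
  and a: "3^u * k \<le> l2" and U: "3^u \<le> l2"
  shows "smul m l2 (sb l2 (3^u * k)) y h = (if h \<le> l2 then
     (if h = 3^u * k then c0 else if 3^u * k < h \<and> h < 3^u * k + 3^u
        then d * of_nat (mlow m u choose (3^u * k + 3^u - h)) else 0) else 0)"
proof (cases "h \<le> l2")
  case False then show ?thesis using smul_sb[OF a, of m y h] by simp
next
  case True
  have yv: "y j = (if j = 0 then c0 else if j < 3^u then d * of_nat (mlow m u choose (3^u - j)) else 0)" for j
    using y[of j] psi_val[OF U, of m j] by auto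
  have "(\<Sum>j\<le>l2. y j * of_nat (sc_coef m (3^u * k) j h)) = (\<Sum>j\<in>{..<3^u}. y j * of_nat (sc_coef m (3^u * k) j h))"
    by (rule sum.mono_neutral_right) (use U in \<open>auto simp: yv\<close>)
  also have "\<dots> = (\<Sum>j\<in>{..<3^u}. if h = 3^u * k + j then y j else 0)"
    by (rule sum.cong) (auto simp: coefK[OF c])
  also have "\<dots> = (\<Sum>j\<in>{..<3^u}. if j = h - 3^u * k \<and> 3^u * k \<le> h then y j else 0)"
    by (rule sum.cong) auto
  also have "\<dots> = (if 3^u * k \<le> h \<and> h < 3^u * k + 3^u then y (h - 3^u * k) else 0)"
    by (cases "3^u * k \<le> h") (auto simp: sum.delta)
  also have "\<dots> = (if h = 3^u * k then c0 else if 3^u * k < h \<and> h < 3^u * k + 3^u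
        then d * of_nat (mlow m u choose (3^u * k + 3^u - h)) else 0)"
  proof -
    have "3^u * k \<le> h \<Longrightarrow> 3^u - (h - 3^u * k) = 3^u * k + 3^u - h" by simp
    thus ?thesis by (auto simp: yv)
  qed
  finally show ?thesis using smul_sb[OF a, of m y h] True by simp
qed

lemma coef_in: "max i j \<le> h \<Longrightarrow> h \<le> i + j \<Longrightarrow>
  (of_nat (sc_coef m i j h) :: 'a::field) = of_nat (h choose i) * of_nat (h choose j) * of_nat ((m + i + j) choose (i + j - h))"
  by (simp add: sc_coef_def)

lemma coef_out: assumes "\<not> (max i j \<le> h \<and> h \<le> i + j)" shows "sc_coef m i j h = 0"
  unfolding sc_coef_def using assms by (rule if_not_P)

lemma D1: assumes c: "CHAR('a::field) = 3"
  shows "(of_nat (sc_coef m (3^u) (3^u) h) :: 'a) = (if h = 3^u then of_nat (m div 3^u + 2)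
     else if 3^u < h \<and> h < 3^u + 3^u then of_nat (mlow m u choose (3^u + 3^u - h))
     else if h = 2 * 3^u then 1 else 0)"
proof -
  define U where "U = (3::nat)^u"
  define M where "M = m div U"
  define ml where "ml = m mod U"
  have U0: "0 < U" unfolding U_def by simp
  have mlU: "ml < U" unfolding ml_def using U0 by simp
  have m: "m = ml + U * M" unfolding ml_def M_def by simp
  have top: "m + U + U = ml + U * (M + 2)" using m by (simp add: algebra_simps)
  show ?thesis
  proof (cases "U \<le> h \<and> h \<le> U + U")
    case False
    then show ?thesis unfolding U_def[symmetric] using coef_out[of U U h m] by auto
  next
    case True
    note ci = coef_in[of U U h m, where 'a='a, unfolded top]
    show ?thesis
    proof (cases "h = U")
      case True
      have "(of_nat ((ml + U * (M + 2)) choose (0 + U * 1)) :: 'a) = of_nat (M + 2)"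
        using lucas2[OF c mlU[unfolded U_def], of 0 "M+2" 1] U0 unfolding U_def by simp
      then show ?thesis using ci True unfolding U_def[symmetric] M_def by simp
    next
      case hU: False
      show ?thesis
      proof (cases "h = U + U")
        case True
        have "(of_nat ((0 + U * 2) choose (0 + U * 1)) :: 'a) = 2"
          using lucas2[OF c, of 0 u 0 2 1] U0 unfolding U_def by simp
        hence "(of_nat (h choose U) :: 'a) = 2" using True by (simp add: mult_2_right)
        moreover have "(of_nat (4::nat) :: 'a) = 1" using c3_mod[OF c, of 4] by simp
        ultimately show ?thesis using ci True U0 unfolding U_def[symmetric] by simp
      next
        case False
        then obtain r where r: "h = r + U * 1" "0 < r" "r < U" using True hU
          by (metis add.commute le_add_diff_inverse le_neq_implies_less mult_1_right nat_add_left_cancel_less zero_less_diff)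
        have e1: "(of_nat (h choose U) :: 'a) = 1"
          using lucas2[OF c r(3)[unfolded U_def], of 0 1 1] r(1) U0 unfolding U_def by simp
        have ur: "U + U - h = (U - r) + U * 0" using r by simp
        have urU: "U - r < U" using r by simp
        have e2: "(of_nat ((ml + U * (M + 2)) choose (U + U - h)) :: 'a) = of_nat (ml choose (U - r))"
          unfolding ur using lucas2[OF c mlU[unfolded U_def] urU[unfolded U_def], of "M+2" 0] unfolding U_def by simp
        have "U + U - h = U - r" using r by simp
        then show ?thesis using ci e1 e2 r False hU unfolding U_def[symmetric] ml_def mlow_def by auto
      qed
    qed
  qed
qed

lemma smul_sb_sb: assumes "a \<le> l2" "b \<le> l2"
  shows "smul m l2 (sb l2 a) (sb l2 b) h = (if h \<le> l2 then of_nat (sc_coef m a b h) else (0::'a::field))"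
proof -
  have "(\<Sum>j\<le>l2. (sb l2 b j :: 'a) * of_nat (sc_coef m a j h)) = (\<Sum>j\<le>l2. if j = b then of_nat (sc_coef m a b h) else 0)"
    by (rule sum.cong) (auto simp: sb_def assms)
  also have "\<dots> = of_nat (sc_coef m a b h)" using assms by simp
  finally have calc: "(\<Sum>j\<le>l2. (sb l2 b j :: 'a) * of_nat (sc_coef m a j h)) = of_nat (sc_coef m a b h)" .
  show ?thesis by (subst smul_sb[OF assms(1)]) (use calc in simp)
qed

lemma D2: assumes c: "CHAR('a::field) = 3"
  shows "(of_nat (sc_coef m (3^u*2) (3^u*2) h) :: 'a) = (if h = 3^u*2 then of_nat ((m div 3^u + 4) choose 2)
     else if 3^u*2 < h \<and> h < 3^u*2 + 3^u then of_nat (m div 3^u + 4) * of_nat (mlow m u choose (3^u*2 + 3^u - h))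
     else 0)"
proof -
  define U where "U = (3::nat)^u"
  define M where "M = m div U"
  define ml where "ml = m mod U"
  have U0: "0 < U" unfolding U_def by simp
  have mlU: "ml < U" unfolding ml_def using U0 by simp
  have m: "m = ml + U * M" unfolding ml_def M_def by simp
  have top: "m + U*2 + U*2 = ml + U * (M + 4)" using m by (simp add: algebra_simps)
  show ?thesis
  proof (cases "U*2 \<le> h \<and> h \<le> U*2 + U*2")
    case False
    then show ?thesis unfolding U_def[symmetric] using coef_out[of "U*2" "U*2" h m] by auto
  next
    case True
    note ci = coef_in[of "U*2" "U*2" h m, where 'a='a, unfolded top]
    show ?thesis
    proof (cases "h = U*2")
      case True
      have "(of_nat ((ml + U * (M + 4)) choose (0 + U * 2)) :: 'a) = of_nat ((M + 4) choose 2)"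
        using lucas2[OF c mlU[unfolded U_def], of 0 "M+4" 2] U0 unfolding U_def by simp
      then show ?thesis using ci True unfolding U_def[symmetric] M_def by (simp add: mult.commute)
    next
      case hU: False
      show ?thesis
      proof (cases "h < U*3")
        case False
        define q where "q = h div U"
        define r where "r = h mod U"
        have hq: "h = r + U * q" unfolding q_def r_def by simp
        have rU: "r < U" unfolding r_def using U0 by simp
        have q34: "q = 3 \<or> q = 4"
        proof -
          have "U * 3 \<le> h" using False by simp
          hence "3 \<le> q" unfolding q_def using U0 by (metis div_le_mono nonzero_mult_div_cancel_left not_gr0 not_less0)
          moreover have "h < U * 5" using True U0 by simp
          hence "q < 5" unfolding q_def using U0 by (simp add: div_less_iff_less_mult mult.commute)
          ultimately show ?thesis by auto
        qed
        have "(of_nat (q choose 2) :: 'a) = 0"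
        proof -
          have "(of_nat (q choose 2) :: 'a) = of_nat ((q choose 2) mod 3)" by (rule c3_mod[OF c])
          also have "(q choose 2) mod 3 = 0" using q34 by (auto simp: choose_two)
          finally show ?thesis by simp
        qed
        hence "(of_nat (h choose (U*2)) :: 'a) = 0"
          using lucas2[OF c rU[unfolded U_def], of 0 q 2] hq U0 unfolding U_def by (simp add: mult.commute)
        then show ?thesis using ci False hU True unfolding U_def[symmetric] by auto
      next
        case h3: True
        define r where "r = h - U * 2"
        have r: "h = r + U * 2" "0 < r" "r < U" using True hU h3 unfolding r_def by auto
        have e1: "(of_nat (h choose (U*2)) :: 'a) = 1"
          using lucas2[OF c r(3)[unfolded U_def], of 0 2 2] r(1) U0 unfolding U_def by (simp add: mult.commute)
        have ur: "U*2 + U*2 - h = (U - r) + U * 1" using r by simp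
        have urU: "U - r < U" using r by simp
        have e2: "(of_nat ((ml + U * (M + 4)) choose (U*2 + U*2 - h)) :: 'a) = of_nat (ml choose (U - r)) * of_nat (M + 4)"
          unfolding ur using lucas2[OF c mlU[unfolded U_def] urU[unfolded U_def], of "M+4" 1] unfolding U_def by simp
        have "U*2 + U - h = U - r" using r by simp
        then show ?thesis using ci e1 e2 r h3 hU unfolding U_def[symmetric] ml_def mlow_def M_def by (auto simp: mult.commute)
      qed
    qed
  qed
qed

lemma D3: assumes c: "CHAR('a::field) = 3"
  shows "(of_nat (sc_coef m (3^u) (3^u*2) h) :: 'a) = (if h = 3^u*2 then 2 * of_nat (m div 3^u + 3)
     else if 3^u*2 < h \<and> h < 3^u*2 + 3^u then 2 * of_nat (mlow m u choose (3^u*2 + 3^u - h))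
     else 0)"
proof -
  define U where "U = (3::nat)^u"
  define M where "M = m div U"
  define ml where "ml = m mod U"
  have U0: "0 < U" unfolding U_def by simp
  have mlU: "ml < U" unfolding ml_def using U0 by simp
  have m: "m = ml + U * M" unfolding ml_def M_def by simp
  have top: "m + U + U*2 = ml + U * (M + 3)" using m by (simp add: algebra_simps)
  show ?thesis
  proof (cases "U*2 \<le> h \<and> h \<le> U + U*2")
    case False
    have "\<not> (max U (U*2) \<le> h \<and> h \<le> U + U*2)" using False U0 by auto
    then show ?thesis unfolding U_def[symmetric] using coef_out[of U "U*2" h m] False by auto
  next
    case True
    have mx: "max U (U*2) = U*2" by simp
    note ci = coef_in[of U "U*2" h m, where 'a='a, unfolded top mx]
    have c2: "(of_nat ((0 + U * 2) choose (0 + U * 1)) :: 'a) = 2"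
      using lucas2[OF c, of 0 u 0 2 1] U0 unfolding U_def by simp
    show ?thesis
    proof (cases "h = U*2")
      case True
      have "(of_nat ((ml + U * (M + 3)) choose (0 + U * 1)) :: 'a) = of_nat (M + 3)"
        using lucas2[OF c mlU[unfolded U_def], of 0 "M+3" 1] U0 unfolding U_def by simp
      moreover have "(of_nat (h choose U) :: 'a) = 2" using c2 True by simp
      ultimately show ?thesis using ci True U0 unfolding U_def[symmetric] M_def by (simp add: mult.commute)
    next
      case hU: False
      show ?thesis
      proof (cases "h = U*3")
        case h3: True
        have "(of_nat ((0 + U * 3) choose (0 + U * 1)) :: 'a) = of_nat (3::nat)"
          using lucas2[OF c, of 0 u 0 3 1] U0 unfolding U_def by simp
        moreover have "(of_nat (3::nat) :: 'a) = 0" using c3_mod[OF c, of 3] by simp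
        ultimately have "(of_nat (h choose U) :: 'a) = 0" using h3 by simp
        then show ?thesis using ci h3 hU True U0 unfolding U_def[symmetric] by auto
      next
        case h3: False
        define r where "r = h - U * 2"
        have r: "h = r + U * 2" "0 < r" "r < U" using True hU h3 unfolding r_def by auto
        have e0: "(of_nat (h choose U) :: 'a) = 2"
          using lucas2[OF c r(3)[unfolded U_def], of 0 2 1] r(1) U0 unfolding U_def by simp
        have e1: "(of_nat (h choose (U*2)) :: 'a) = 1"
          using lucas2[OF c r(3)[unfolded U_def], of 0 2 2] r(1) U0 unfolding U_def by (simp add: mult.commute)
        have ur: "U + U*2 - h = (U - r) + U * 0" using r by simp
        have urU: "U - r < U" using r by simp
        have e2: "(of_nat ((ml + U * (M + 3)) choose (U + U*2 - h)) :: 'a) = of_nat (ml choose (U - r))"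
          unfolding ur using lucas2[OF c mlU[unfolded U_def] urU[unfolded U_def], of "M+3" 0] unfolding U_def by simp
        have "U*2 + U - h = U - r" using r by simp
        then show ?thesis using ci e0 e1 e2 r h3 hU True unfolding U_def[symmetric] ml_def mlow_def M_def by (auto simp: mult.commute)
      qed
    qed
  qed
qed

lemma of_nat_mod3: assumes c: "CHAR('a::field) = 3" and "x mod 3 = y mod 3"
  shows "(of_nat x :: 'a) = of_nat y"
  using c3_mod[OF c, of x] c3_mod[OF c, of y] assms(2) by simp

lemma choose2_mod3: assumes c: "CHAR('a::field) = 3"
  shows "(of_nat (x choose 2) :: 'a) = of_nat ((x mod 3) choose 2)"
  using lucas[OF c, of x 2 1] by simp

theorem mainTheorem5:
  fixes lam1 lam2 u :: nat
  assumes char3: "CHAR('a::field) = 3"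
    and part: "lam2 \<le> lam1"
    and big: "lam2 \<ge> 2 * 3 ^ u"
  defines "m \<equiv> lam1 - lam2"
  defines "mu \<equiv> digit3 m u"
  defines "B1 \<equiv> (sb lam2 (3 ^ u) :: nat \<Rightarrow> 'a)"
  defines "B2 \<equiv> (sb lam2 (2 * 3 ^ u) :: nat \<Rightarrow> 'a)"
  defines "P \<equiv> (psi m u lam2 :: nat \<Rightarrow> 'a)"
  defines "one \<equiv> (sone lam2 :: nat \<Rightarrow> 'a)"
  shows
    "smul m lam2 B1 B1 =
       sadd (smul m lam2 B1 (sadd (ssmult (of_nat ((mu + 2) choose 1)) one) P)) B2 \<and>
     smul m lam2 B2 B2 =
       smul m lam2 B2 (sadd (ssmult (of_nat ((mu + 1) choose 2)) one)
                            (ssmult (of_nat ((mu + 1) choose 1)) P)) \<and>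
     smul m lam2 B1 B2 =
       smul m lam2 B2 (ssub (ssmult (2 * of_nat (mu choose 1)) one) P)"
proof -
  define U where "U = (3::nat)^u"
  define M where "M = m div U"
  have muM: "mu = M mod 3" unfolding mu_def M_def U_def digit3_def by simp
  have U1: "3^u * 1 \<le> lam2" "3^u \<le> lam2" "3^u * 2 \<le> lam2" using big by auto
  have B1': "B1 = sb lam2 (3^u * 1)" unfolding B1_def by simp
  have B2': "B2 = sb lam2 (3^u * 2)" unfolding B2_def by (simp add: mult.commute)
  have oneE: "one j = (if j = 0 then 1 else 0)" for j unfolding one_def sone_def sb_def by simp
  have g4: "(x + 4) mod 3 = (x mod 3 + 1) mod 3" for x :: nat
  proof -
    have "x + 4 = (x + 1) + 3" by simp
    hence "(x + 4) mod 3 = (x + 1) mod 3" by (metis mod_add_self2)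
    thus ?thesis by (simp add: mod_Suc_eq)
  qed
  have g3: "(x + 3) mod 3 = x mod 3 mod 3" for x :: nat by simp
  have three0: "(of_nat (3::nat) :: 'a) = 0" using c3_mod[OF char3, of 3] by simp
  have eq1: "smul m lam2 B1 B1 = sadd (smul m lam2 B1 (sadd (ssmult (of_nat ((mu + 2) choose 1)) one) P)) B2"
  proof
    fix h
    let ?y = "sadd (ssmult (of_nat ((mu + 2) choose 1)) one) P"
    have y: "?y j = of_nat ((mu + 2) choose 1) * (if j = 0 then 1 else 0) + 1 * psi m u lam2 j" for j
      unfolding sadd_def ssmult_def oneE P_def by simp
    note R = lemR[OF char3 y U1(1) U1(2), of h, folded B1']
    note L = smul_sb_sb[OF U1(1) U1(1), of m h, where 'a='a, folded B1']
    have MM: "(of_nat (m div 3^u + 2) :: 'a) = of_nat (mu + 2)"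
      by (rule of_nat_mod3[OF char3]) (unfold muM M_def U_def, presburger)
    show "smul m lam2 B1 B1 h = sadd (smul m lam2 B1 ?y) B2 h"
      unfolding sadd_def[of "smul m lam2 B1 ?y"] R L B2' using D1[OF char3, of m u h] MM U1
      by (auto simp: sb_def mult_2_right)
  qed
  have eq2: "smul m lam2 B2 B2 =
       smul m lam2 B2 (sadd (ssmult (of_nat ((mu + 1) choose 2)) one)
                            (ssmult (of_nat ((mu + 1) choose 1)) P))"
  proof
    fix h
    let ?y = "sadd (ssmult (of_nat ((mu + 1) choose 2)) one) (ssmult (of_nat ((mu + 1) choose 1)) P)"
    have y: "?y j = of_nat ((mu + 1) choose 2) * (if j = 0 then 1 else 0) + of_nat ((mu + 1) choose 1) * psi m u lam2 j" for j
      unfolding sadd_def ssmult_def oneE P_def by simp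
    note R = lemR[OF char3 y U1(3) U1(2), of h, folded B2']
    note L = smul_sb_sb[OF U1(3) U1(3), of m h, where 'a='a, folded B2']
    have MM0: "(of_nat (m div 3^u + 4) :: 'a) = of_nat (mu + 1)"
      by (rule of_nat_mod3[OF char3]) (unfold muM M_def U_def, rule g4)
    hence MM: "(of_nat (m div 3^u + 4) :: 'a) = of_nat ((mu + 1) choose 1)" by simp
    have MC: "(of_nat ((m div 3^u + 4) choose 2) :: 'a) = of_nat ((mu + 1) choose 2)"
    proof -
      have "(m div 3^u + 4) mod 3 = (mu + 1) mod 3" by (unfold muM M_def U_def, rule g4)
      thus ?thesis using choose2_mod3[OF char3, of "m div 3^u + 4"] choose2_mod3[OF char3, of "mu + 1"] by simp
    qed
    show "smul m lam2 B2 B2 h = smul m lam2 B2 ?y h"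
      unfolding R L using D2[OF char3, of m u h] MM MC by auto
  qed
  have eq3: "smul m lam2 B1 B2 =
       smul m lam2 B2 (ssub (ssmult (2 * of_nat (mu choose 1)) one) P)"
  proof
    fix h
    let ?y = "ssub (ssmult (2 * of_nat (mu choose 1)) one) P"
    have y: "?y j = 2 * of_nat (mu choose 1) * (if j = 0 then 1 else 0) + (-1) * psi m u lam2 j" for j
      unfolding ssub_def ssmult_def oneE P_def by simp
    note R = lemR[OF char3 y U1(3) U1(2), of h, folded B2']
    note L = smul_sb_sb[OF U1(1) U1(3), of m h, where 'a='a, folded B1' B2']
    have MM0: "(of_nat (m div 3^u + 3) :: 'a) = of_nat mu"
      by (rule of_nat_mod3[OF char3]) (unfold muM M_def U_def, rule g3)
    hence MM: "(of_nat (m div 3^u + 3) :: 'a) = of_nat (mu choose 1)" by simp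
    have tw: "2 * (x::'a) = - x" for x
    proof -
      have "3 * x = 0" using three0 by simp
      thus ?thesis by (simp add: eq_neg_iff_add_eq_0)
    qed
    show "smul m lam2 B1 B2 h = smul m lam2 B2 ?y h"
      unfolding R L using D3[OF char3, of m u h] MM tw by auto
  qed
  show ?thesis using eq1 eq2 eq3 by blast
qed

end
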